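(* Let $U>0$. For every integer $L>\frac{8}{U}$ let $m_L$ be an integer with $\frac{L}{2} < m_L < \frac{3L}{2}$, and let $\xi_{m_L}$ denote the unique positive solution $\xi$ of $$\sinh(\xi) = -\frac{U}{4\cos(m_L\pi/L)}\,\frac{\sinh(\xi L)}{\cosh(\xi L) - (-1)^{m_L}}.$$ Suppose $\lim_{L\to\infty} m_L\frac{\pi}{L} = q$ with $\frac{\pi}{2} < q < \frac{3\pi}{2}$. Then $$\lim_{L\to\infty}\xi_{m_L} = -\operatorname{arsinh}\left(\frac{U}{4\cos(q)}\right).$$
   Context: For $N=2$ electrons and one down spin on a lattice of length $L$, a $k$-$\Lambda$ two-string solution of the Lieb-Wu equations $e^{ik_jL} = \frac{\Lambda-\sin k_j - iU/4}{\Lambda - \sin k_j + iU/4}$ ($j=1,2$), $\prod_{j}\frac{\Lambda-\sin k_j - iU/4}{\Lambda - \sin k_j + iU/4}=1$, has $k_{1,2} = q\mp i\xi$ with $q = m\pi/L$, $\xi>0$ solving the displayed equation and $\Lambda = \sin(q)\cosh(\xi)$; for $U>0$, $L>8/U$ and $L/2<m<3L/2$ the displayed equation has exactly one positive solution. The result says that in the limit $L\to\infty$ these strings approach the ideal string positions $\sinh\xi = -U/(4\cos q)$. *)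

theory Defs
  imports "HOL-Analysis.Analysis"
begin

end

theory Submission
  imports Defs "HOL-Real_Asymp.Real_Asymp"
begin

lemma sinh_le_2x: fixes x :: real assumes "0 \<le> x" "x \<le> 1" shows "sinh x \<le> 2 * x"
proof -
  have "exp x \<le> 1 + x + x^2" using exp_bound assms by blast
  moreover have "exp (-x) \<ge> 1 + (-x)" by (rule exp_ge_add_one_self)
  moreover have "x^2 \<le> x" using mult_right_mono[of x 1 x] assms by (simp add: power2_eq_square)
  moreover have "sinh x = (exp x - exp(-x))/2" by (simp add: sinh_def)
  ultimately show ?thesis using assms by argo
qed

lemma cosh_gt1: "x > 0 \<Longrightarrow> cosh (x::real) > 1"
proof -
  assume "x > 0"
  hence t: "exp x > 1" by simp
  have "cosh x - 1 = (exp x - 1)^2 / (2 * exp x)" unfolding cosh_def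
    by (simp add: exp_minus field_simps power2_eq_square)
  moreover have "(exp x - 1)^2 / (2 * exp x) > 0" using t by simp
  ultimately show ?thesis by simp
qed

lemma sinh_ge_cosh_m1: fixes x :: real assumes "0 < x"
  shows "1 \<le> sinh x / (cosh x - 1)"
proof -
  have c: "cosh x > 1" using assms by (rule cosh_gt1)
  have a: "exp (-x) \<le> 1" using assms by simp
  have b: "sinh x = (exp x - exp(-x))/2" "cosh x = (exp x + exp(-x))/2"
    by (simp_all add: sinh_def cosh_def)
  have "cosh x - 1 \<le> sinh x" unfolding b using a by argo
  thus ?thesis using c by simp
qed

lemma tanh_half_ge: fixes x :: real assumes "0 < x"
  shows "x / (2 + x) \<le> sinh x / (cosh x + 1)"
proof -
  define t where "t = exp x"
  have t1: "t \<ge> 1 + x" unfolding t_def by (rule exp_ge_add_one_self)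
  have tp: "t > 0" unfolding t_def by simp
  have em: "exp (-x) = 1 / t" unfolding t_def by (simp add: exp_minus field_simps)
  have eq: "sinh x / (cosh x + 1) = (t - 1) / (t + 1)"
  proof -
    have d: "(t + 1/t)/2 + 1 = (t+1)*(t+1)/(2*t)" using tp by (simp add: field_simps) 
    have n: "(t - 1/t)/2 = (t-1)*(t+1)/(2*t)" using tp by (simp add: field_simps)
    have "sinh x / (cosh x + 1) = ((t - 1/t)/2) / ((t + 1/t)/2 + 1)"
      unfolding sinh_def cosh_def em t_def[symmetric] by simp
    also have "\<dots> = ((t-1)*(t+1)/(2*t)) / ((t+1)*(t+1)/(2*t))" unfolding d n ..
    also have "\<dots> = ((t-1)*(t+1)) / ((t+1)*(t+1))"
      using tp by simp
    also have "\<dots> = (t-1)/(t+1)" using tp by (intro mult_divide_mult_cancel_right) simp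
    finally show ?thesis .
  qed
  have "x / (2 + x) \<le> (t - 1) / (t + 1)" using t1 tp assms
    by (simp add: divide_simps algebra_simps)
  then show ?thesis using eq by simp
qed

lemma aux_lin: "(P::real)/4 \<le> 2*(2+X) \<Longrightarrow> X \<le> P/32 \<Longrightarrow> 64 < P \<Longrightarrow> False" by (simp add: field_simps)

lemma powi_m1: "(-1::real) powi k = 1 \<or> (-1::real) powi k = -1"
  using power_int_minus_one_mult_self[of k, where ?'a=real]
  by (metis square_eq_1_iff)

lemma cos_neg: fixes x :: real assumes "pi/2 < x" "x < 3*pi/2" shows "cos x < 0"
proof -
  have "cos (x - pi) > 0" using assms by (intro cos_gt_zero_pi) auto
  thus ?thesis by simp
qed

theorem mainTheorem4:
  fixes U q :: real and m :: "nat \<Rightarrow> int" and \<xi> :: "nat \<Rightarrow> real"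
  assumes U_pos: "U > 0"
    and m_range: "\<And>L. real L > 8 / U \<Longrightarrow> real L / 2 < real_of_int (m L) \<and> real_of_int (m L) < 3 * real L / 2"
    and xi_sol: "\<And>L. real L > 8 / U \<Longrightarrow> \<xi> L > 0 \<and>
        sinh (\<xi> L) = - U / (4 * cos (real_of_int (m L) * pi / real L)) *
          (sinh (\<xi> L * real L) / (cosh (\<xi> L * real L) - (-1) powi (m L)))"
    and xi_unique: "\<And>L \<eta>. real L > 8 / U \<Longrightarrow> \<eta> > 0 \<Longrightarrow>
        sinh \<eta> = - U / (4 * cos (real_of_int (m L) * pi / real L)) *
          (sinh (\<eta> * real L) / (cosh (\<eta> * real L) - (-1) powi (m L))) \<Longrightarrow> \<eta> = \<xi> L"
    and m_lim: "(\<lambda>L. real_of_int (m L) * pi / real L) \<longlonglongrightarrow> q"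
    and q_range: "pi / 2 < q" "q < 3 * pi / 2"
  shows "\<xi> \<longlonglongrightarrow> - arsinh (U / (4 * cos q))"
proof -
  define c where "c L = cos (real_of_int (m L) * pi / real L)" for L
  define a where "a L = - U / (4 * c L)" for L
  define s where "s L = ((-1::real) powi (m L))" for L
  define g where "g L = sinh (\<xi> L * real L) / (cosh (\<xi> L * real L) - s L)" for L
  define \<delta> where "\<delta> = min 1 (U/32)"
  have \<delta>pos: "\<delta> > 0" using U_pos by (simp add: \<delta>_def)
  have cq: "cos q < 0" using q_range by (rule cos_neg)
  have ev: "eventually (\<lambda>L. real L > 64 / U) sequentially"
    using filterlim_real_sequentially by (simp add: filterlim_at_top_dense)
  have key: "\<xi> L \<ge> \<delta> \<and> sinh (\<xi> L) = a L * g L" if L: "real L > 64 / U" for L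
  proof -
    have L8: "real L > 8 / U" using L U_pos by (smt (verit) divide_right_mono)
    have Lpos: "real L > 0" using L U_pos by (smt (verit) divide_pos_pos)
    have ULbig: "U * real L > 64" using L U_pos by (simp add: field_simps)
    from m_range[OF L8] have "pi/2 < real_of_int (m L) * pi / real L"
      "real_of_int (m L) * pi / real L < 3*pi/2" using Lpos pi_gt_zero
      by (auto simp: field_simps)
    hence cneg: "c L < 0" unfolding c_def by (rule cos_neg)
    have cge: "c L \<ge> -1" unfolding c_def by simp
    have aU: "a L \<ge> U / 4" unfolding a_def using cneg cge U_pos mult_left_mono[of "-1" "c L" U]
      by (simp add: field_simps)
    from xi_sol[OF L8] have xp: "\<xi> L > 0" and eq: "sinh (\<xi> L) = a L * g L"
      unfolding a_def g_def s_def c_def by auto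
    have xLp: "\<xi> L * real L > 0" using xp Lpos by simp
    have "\<xi> L \<ge> \<delta>"
    proof (rule ccontr)
      assume "\<not> \<delta> \<le> \<xi> L"
      hence lt: "\<xi> L < \<delta>" by simp
      hence x1: "\<xi> L \<le> 1" "\<xi> L < U/32" by (auto simp: \<delta>_def)
      have sb: "sinh (\<xi> L) \<le> 2 * \<xi> L" using sinh_le_2x xp x1 by simp
      from powi_m1[of "m L"] show False
      proof
        assume "(-1::real) powi m L = 1"
        hence "g L \<ge> 1" unfolding g_def s_def using sinh_ge_cosh_m1[OF xLp] by simp
        hence "a L * g L \<ge> a L" using aU U_pos
          by (smt (verit) mult_left_mono mult_cancel_left1 divide_pos_pos)
        thus False using eq sb x1 aU U_pos by linarith
      next
        assume "(-1::real) powi m L = -1"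
        hence "g L \<ge> (\<xi> L * real L) / (2 + \<xi> L * real L)"
          unfolding g_def s_def using tanh_half_ge[OF xLp] by simp
        hence "a L * g L \<ge> (U/4) * ((\<xi> L * real L) / (2 + \<xi> L * real L))"
          using aU U_pos xLp
          by (smt (verit) mult_mono divide_nonneg_pos zero_le_divide_iff)
        hence "2 * \<xi> L \<ge> (U/4) * ((\<xi> L * real L) / (2 + \<xi> L * real L))"
          using eq sb by linarith
        hence "2 * \<xi> L * (2 + \<xi> L * real L) \<ge> (U/4) * (\<xi> L * real L)"
          using xLp by (simp add: field_simps)
        hence "\<xi> L * ((U/4) * real L) \<le> \<xi> L * (2 * (2 + \<xi> L * real L))"
          by (simp add: algebra_simps)
        hence h1: "2 * (2 + \<xi> L * real L) \<ge> (U/4) * real L"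
          using xp by (rule mult_left_le_imp_le)
        have h2: "\<xi> L * real L \<le> (U/32) * real L"
          using x1 Lpos by (intro mult_right_mono) auto
        have p1: "(U*real L)/4 \<le> 2*(2+\<xi> L*real L)" using h1 by simp
        have p2: "\<xi> L*real L \<le> (U*real L)/32" using h2 by simp
        show False by (rule aux_lin[OF p1 p2 ULbig])
      qed
    qed
    thus ?thesis using eq by simp
  qed
  have xinf: "filterlim (\<lambda>L. \<xi> L * real L) at_top sequentially"
  proof (rule filterlim_at_top_mono)
    show "filterlim (\<lambda>L. \<delta> * real L) at_top sequentially"
      by (rule filterlim_tendsto_pos_mult_at_top[OF tendsto_const \<delta>pos filterlim_real_sequentially])
    show "eventually (\<lambda>L. \<delta> * real L \<le> \<xi> L * real L) sequentially"
      using ev by eventually_elim (use key in \<open>auto intro: mult_right_mono\<close>)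
  qed
  define H where "H x = \<bar>sinh x / (cosh x - 1) - 1\<bar> + \<bar>sinh x / (cosh x + 1) - 1\<bar>" for x :: real
  have H0: "(H \<longlongrightarrow> 0) at_top" unfolding H_def by real_asymp
  have "((\<lambda>L. H (\<xi> L * real L)) \<longlongrightarrow> 0) sequentially"
    using H0 xinf by (rule filterlim_compose)
  hence "((\<lambda>L. g L - 1) \<longlongrightarrow> 0) sequentially"
  proof (rule Lim_null_comparison[rotated])
    show "\<forall>\<^sub>F L in sequentially. norm (g L - 1) \<le> H (\<xi> L * real L)"
    proof (intro always_eventually allI)
      fix L
      show "norm (g L - 1) \<le> H (\<xi> L * real L)"
        using powi_m1[of "m L"] unfolding g_def s_def H_def by auto
    qed
  qed
  hence g1: "g \<longlonglongrightarrow> 1" by (simp add: LIM_zero_iff)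
  have cl: "c \<longlonglongrightarrow> cos q" unfolding c_def by (intro tendsto_cos m_lim)
  have "(\<lambda>L. - U / (4 * c L)) \<longlonglongrightarrow> - U / (4 * cos q)"
    by (rule tendsto_divide[OF tendsto_const tendsto_mult[OF tendsto_const cl]]) (use cq in simp)
  hence alim: "a \<longlonglongrightarrow> - U / (4 * cos q)" unfolding a_def .
  have "(\<lambda>L. a L * g L) \<longlonglongrightarrow> - U / (4 * cos q) * 1"
    by (rule tendsto_mult[OF alim g1])
  hence "(\<lambda>L. a L * g L) \<longlonglongrightarrow> - U / (4 * cos q)" by simp
  hence t1: "(\<lambda>L. arsinh (a L * g L)) \<longlonglongrightarrow> arsinh (- U / (4 * cos q))"
    by (rule tendsto_arsinh)
  have ev2: "eventually (\<lambda>L. arsinh (a L * g L) = \<xi> L) sequentially"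
    using ev
  proof eventually_elim
    case (elim L)
    then have "sinh (\<xi> L) = a L * g L" using key by blast
    then show ?case by (metis arsinh_sinh_real)
  qed
  have "\<xi> \<longlonglongrightarrow> arsinh (- U / (4 * cos q))"
    using tendsto_cong[OF ev2] t1 by simp
  thus ?thesis by (simp add: arsinh_minus_real)
qed

end
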